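(* Let $U$ be a domain in a hyperbolic 3-manifold and let $F:U\to N$ be a volume preserving 1-Lipschitz map into a hyperbolic 3-manifold $N$. Then $F$ is an isometric embedding. *)

theory Defs
  imports "HOL-Analysis.Analysis"
begin

definition H3 :: "(real^3) set" where
  "H3 = {x. x $ 3 > 0}"

definition hdist :: "real^3 \<Rightarrow> real^3 \<Rightarrow> real" where
  "hdist x y = arcosh (1 + (norm (x - y))^2 / (2 * (x $ 3) * (y $ 3)))"

definition curve_length :: "(real \<Rightarrow> 'a::metric_space) \<Rightarrow> ereal" where
  "curve_length g =
     (SUP ts \<in> {ts. sorted ts \<and> ts \<noteq> [] \<and> hd ts = 0 \<and> last ts = 1}.
        ereal (\<Sum>i < length ts - 1. dist (g (ts ! i)) (g (ts ! Suc i))))"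

definition length_metric :: "'a::metric_space itself \<Rightarrow> bool" where
  "length_metric _ \<longleftrightarrow>
     (\<forall>x y::'a. ereal (dist x y) =
        (INF g \<in> {g. continuous_on {0..1} g \<and> g 0 = x \<and> g 1 = y}. curve_length g))"

text \<open>A (complete, connected) hyperbolic 3-manifold, viewed as a metric space with its
  Riemannian distance: a complete length space every point of which has a metric ball
  isometric to a metric ball of the same radius in hyperbolic 3-space.\<close>
definition hyperbolic_3_manifold :: "'a::metric_space itself \<Rightarrow> bool" where
  "hyperbolic_3_manifold T \<longleftrightarrow>
     length_metric T \<and> complete (UNIV :: 'a set) \<and>
     (\<forall>x::'a. \<exists>r>0. \<exists>\<phi>.
        \<phi> ` ball x r = {q \<in> H3. hdist (\<phi> x) q < r} \<and> \<phi> x \<in> H3 \<and>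
        (\<forall>y\<in>ball x r. \<forall>z\<in>ball x r. hdist (\<phi> y) (\<phi> z) = dist y z))"

section \<open>Volume: 3-dimensional Hausdorff measure (Riemannian volume up to a constant)\<close>

definition hausdorff3_content :: "real \<Rightarrow> 'a::metric_space set \<Rightarrow> ennreal" where
  "hausdorff3_content \<delta> A =
     (INF C \<in> {C :: nat \<Rightarrow> 'a set. A \<subseteq> (\<Union>i. C i) \<and>
                  (\<forall>i. bounded (C i) \<and> diameter (C i) \<le> \<delta>)}.
        (\<Sum>i. ennreal ((diameter (C i)) ^ 3)))"

definition vol3 :: "'a::metric_space set \<Rightarrow> ennreal" where
  "vol3 A = (SUP \<delta> \<in> {0<..}. hausdorff3_content \<delta> A)"

definition domain :: "'a::metric_space set \<Rightarrow> bool" where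
  "domain U \<longleftrightarrow> open U \<and> connected U \<and> U \<noteq> {}"

definition volume_preserving_on :: "'a::metric_space set \<Rightarrow> ('a \<Rightarrow> 'b::metric_space) \<Rightarrow> bool" where
  "volume_preserving_on U F \<longleftrightarrow>
     (\<forall>E. E \<in> sets borel \<longrightarrow> E \<subseteq> U \<longrightarrow> vol3 (F ` E) = vol3 E)"

definition one_lipschitz_on :: "'a::metric_space set \<Rightarrow> ('a \<Rightarrow> 'b::metric_space) \<Rightarrow> bool" where
  "one_lipschitz_on U F \<longleftrightarrow> (\<forall>x\<in>U. \<forall>y\<in>U. dist (F x) (F y) \<le> dist x y)"

text \<open>Isometric embedding in the Riemannian sense: an injective local isometry.\<close>
definition isometric_embedding_on :: "'a::metric_space set \<Rightarrow> ('a \<Rightarrow> 'b::metric_space) \<Rightarrow> bool" where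
  "isometric_embedding_on U F \<longleftrightarrow> inj_on F U \<and>
     (\<forall>x\<in>U. \<exists>r>0. ball x r \<subseteq> U \<and>
        (\<forall>y\<in>ball x r. \<forall>z\<in>ball x r. dist (F y) (F z) = dist y z))"

end

theory Submission
  imports Defs
begin


lemma diameter_le_metric:
  fixes S :: "'a::metric_space set"
  assumes "0 \<le> d" "\<And>x y. x \<in> S \<Longrightarrow> y \<in> S \<Longrightarrow> dist x y \<le> d"
  shows "diameter S \<le> d"
  using assms by (auto simp: diameter_def intro!: cSUP_least)

lemma bounded_by_dist:
  fixes S :: "'a::metric_space set"
  assumes "\<And>x y. x \<in> S \<Longrightarrow> y \<in> S \<Longrightarrow> dist x y \<le> d"
  shows "bounded S"
  using assms bounded_two_points by blast

lemma isometric_image_diam: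
  fixes G :: "'a::metric_space \<Rightarrow> 'b::metric_space"
  assumes iso: "\<And>a b. a \<in> X \<Longrightarrow> b \<in> X \<Longrightarrow> dist (G a) (G b) = dist a b"
    and b: "bounded X"
  shows "bounded (G ` X)" "diameter (G ` X) \<le> diameter X"
proof -
  have d: "dist (G a) (G b) \<le> diameter X" if "a \<in> X" "b \<in> X" for a b
    using iso[OF that] diameter_bounded_bound[OF b that] by simp
  show "bounded (G ` X)" using d by (intro bounded_by_dist) auto
  show "diameter (G ` X) \<le> diameter X"
    using d diameter_ge_0[OF b] by (intro diameter_le_metric) auto
qed



abbreviation covs :: "real \<Rightarrow> 'a::metric_space set \<Rightarrow> (nat \<Rightarrow> 'a set) set" where
  "covs \<delta> A \<equiv> {C :: nat \<Rightarrow> 'a set. A \<subseteq> (\<Union>i. C i) \<and> (\<forall>i. bounded (C i) \<and> diameter (C i) \<le> \<delta>)}"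

lemma content_le_cover:
  assumes "A \<subseteq> (\<Union>i. C i)" "\<And>i. bounded (C i)" "\<And>i. diameter (C i) \<le> \<delta>"
  shows "hausdorff3_content \<delta> A \<le> (\<Sum>i. ennreal ((diameter (C i)) ^ 3))"
  unfolding hausdorff3_content_def using assms by (intro INF_lower) auto

lemma content_ge:
  assumes "\<And>C. A \<subseteq> (\<Union>i. C i) \<Longrightarrow> (\<forall>i. bounded (C i) \<and> diameter (C i) \<le> \<delta>) \<Longrightarrow>
      x \<le> (\<Sum>i. ennreal ((diameter (C i)) ^ 3))"
  shows "x \<le> hausdorff3_content \<delta> A"
  unfolding hausdorff3_content_def using assms by (intro INF_greatest) auto

lemma content_mono_set:
  assumes "A \<subseteq> B" shows "hausdorff3_content \<delta> A \<le> hausdorff3_content \<delta> B"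
  using assms by (intro content_ge content_le_cover) auto

lemma content_antimono:
  assumes "\<delta> \<le> \<delta>'" shows "hausdorff3_content \<delta>' A \<le> hausdorff3_content \<delta> A"
  using assms by (intro content_ge content_le_cover) (auto intro: order_trans)

lemma vol3_mono:
  assumes "A \<subseteq> B" shows "vol3 A \<le> vol3 B"
  unfolding vol3_def using content_mono_set[OF assms] by (intro SUP_mono) auto

lemma content_le_vol3:
  assumes "\<delta> > 0" shows "hausdorff3_content \<delta> A \<le> vol3 A"
  unfolding vol3_def using assms by (intro SUP_upper) auto

lemma vol3_le:
  assumes "\<And>\<delta>. \<delta> > 0 \<Longrightarrow> hausdorff3_content \<delta> A \<le> x"
  shows "vol3 A \<le> x"
  unfolding vol3_def using assms by (intro SUP_least) auto

lemma vol3_iso_le: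
  fixes G :: "'a::metric_space \<Rightarrow> 'b::metric_space"
  assumes iso: "\<And>a b. a \<in> S \<Longrightarrow> b \<in> S \<Longrightarrow> dist (G a) (G b) = dist a b"
  shows "vol3 (G ` S) \<le> vol3 S"
proof (rule vol3_le)
  fix \<delta> :: real assume "\<delta> > 0"
  have "hausdorff3_content \<delta> (G ` S) \<le> hausdorff3_content \<delta> S"
  proof (rule content_ge)
    fix C :: "nat \<Rightarrow> 'a set" assume cov: "S \<subseteq> (\<Union>i. C i)" and C: "\<forall>i. bounded (C i) \<and> diameter (C i) \<le> \<delta>"
    define C' where "C' i = G ` (C i \<inter> S)" for i
    have b: "bounded (C i \<inter> S)" for i using C by auto
    have iso': "\<And>a b. a \<in> C i \<inter> S \<Longrightarrow> b \<in> C i \<inter> S \<Longrightarrow> dist (G a) (G b) = dist a b" for i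
      using iso by auto
    have d: "diameter (C' i) \<le> diameter (C i)" for i
      using isometric_image_diam(2)[OF iso' b, of i] diameter_subset[of "C i \<inter> S" "C i"] C
      unfolding C'_def by fastforce
    have bC': "bounded (C' i)" for i
      unfolding C'_def by (rule isometric_image_diam(1)[OF iso' b])
    have "hausdorff3_content \<delta> (G ` S) \<le> (\<Sum>i. ennreal ((diameter (C' i)) ^ 3))"
    proof (rule content_le_cover)
      show "G ` S \<subseteq> (\<Union>i. C' i)" using cov unfolding C'_def by blast
      show "bounded (C' i)" for i by (rule bC')
      show "diameter (C' i) \<le> \<delta>" for i using d[of i] C by (meson order_trans)
    qed
    also have "\<dots> \<le> (\<Sum>i. ennreal ((diameter (C i)) ^ 3))"
    proof (intro suminf_le summableI ennreal_leI power_mono d)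
      show "0 \<le> diameter (C' i)" for i using diameter_ge_0[OF bC'] .
    qed
    finally show "hausdorff3_content \<delta> (G ` S) \<le> (\<Sum>i. ennreal ((diameter (C i)) ^ 3))" .
  qed
  also have "\<dots> \<le> vol3 S" using content_le_vol3 \<open>\<delta> > 0\<close> .
  finally show "hausdorff3_content \<delta> (G ` S) \<le> vol3 S" .
qed

lemma vol3_iso_eq:
  fixes G :: "'a::metric_space \<Rightarrow> 'b::metric_space"
  assumes iso: "\<And>a b. a \<in> S \<Longrightarrow> b \<in> S \<Longrightarrow> dist (G a) (G b) = dist a b"
  shows "vol3 (G ` S) = vol3 S"
proof (rule antisym)
  show "vol3 (G ` S) \<le> vol3 S" using vol3_iso_le iso .
  have inj: "inj_on G S"
    using iso unfolding inj_on_def by (metis dist_eq_0_iff)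
  let ?H = "inv_into S G"
  have HS: "?H ` (G ` S) = S" using inj by simp
  have "dist (?H a) (?H b) = dist a b" if "a \<in> G ` S" "b \<in> G ` S" for a b
    using that iso inj by (auto simp: inv_into_f_f)
  from vol3_iso_le[of "G ` S" ?H, OF this] show "vol3 S \<le> vol3 (G ` S)" using HS by simp
qed

lemma content_sep:
  assumes sep: "\<And>a b. a \<in> A \<Longrightarrow> b \<in> B \<Longrightarrow> \<eta> \<le> dist a b" and "\<delta> < \<eta>"
  shows "hausdorff3_content \<delta> A + hausdorff3_content \<delta> B \<le> hausdorff3_content \<delta> (A \<union> B)"
proof (rule content_ge)
  fix C :: "nat \<Rightarrow> 'a set" assume cov: "A \<union> B \<subseteq> (\<Union>i. C i)" and C: "\<forall>i. bounded (C i) \<and> diameter (C i) \<le> \<delta>"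
  have "0 \<le> \<delta>" using C diameter_ge_0 by (meson order_trans)
  define CA where "CA i = (if C i \<inter> A = {} then {} else C i)" for i
  define CB where "CB i = (if C i \<inter> B = {} then {} else C i)" for i
  have "hausdorff3_content \<delta> A \<le> (\<Sum>i. ennreal ((diameter (CA i)) ^ 3))"
    using cov C \<open>0 \<le> \<delta>\<close> unfolding CA_def by (intro content_le_cover) (auto, blast)
  moreover have "hausdorff3_content \<delta> B \<le> (\<Sum>i. ennreal ((diameter (CB i)) ^ 3))"
    using cov C \<open>0 \<le> \<delta>\<close> unfolding CB_def by (intro content_le_cover) (auto, blast)
  moreover have "(\<Sum>i::nat. ennreal ((diameter (CA i)) ^ 3)) + (\<Sum>i. ennreal ((diameter (CB i)) ^ 3))
      = (\<Sum>i::nat. ennreal ((diameter (CA i)) ^ 3) + ennreal ((diameter (CB i)) ^ 3))"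
    by (rule suminf_add; rule summableI)
  moreover have "\<dots> \<le> (\<Sum>i. ennreal ((diameter (C i)) ^ 3))"
  proof (intro suminf_le summableI)
    fix i
    have "C i \<inter> A = {} \<or> C i \<inter> B = {}"
    proof (rule ccontr)
      assume "\<not> ?thesis"
      then obtain a b where ab: "a \<in> C i" "a \<in> A" "b \<in> C i" "b \<in> B" by blast
      have "dist a b \<le> diameter (C i)" using C ab diameter_bounded_bound by blast
      then show False using sep[OF ab(2,4)] C \<open>\<delta> < \<eta>\<close> by (meson leD order_trans)
    qed
    then show "ennreal ((diameter (CA i)) ^ 3) + ennreal ((diameter (CB i)) ^ 3) \<le> ennreal ((diameter (C i)) ^ 3)"
      unfolding CA_def CB_def by auto
  qed
  ultimately show "hausdorff3_content \<delta> A + hausdorff3_content \<delta> B \<le> (\<Sum>i. ennreal ((diameter (C i)) ^ 3))"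
    by (smt (verit) add_mono order_trans)
qed

lemma vol3_sep:
  assumes sep: "\<And>a b. a \<in> A \<Longrightarrow> b \<in> B \<Longrightarrow> \<eta> \<le> dist a b" and "0 < \<eta>"
  shows "vol3 A + vol3 B \<le> vol3 (A \<union> B)"
proof -
  have key: "hausdorff3_content d1 A + hausdorff3_content d2 B \<le> vol3 (A \<union> B)"
    if "d1 > 0" "d2 > 0" for d1 d2
  proof -
    define d where "d = min (min d1 d2) (\<eta>/2)"
    have d: "d > 0" "d \<le> d1" "d \<le> d2" "d < \<eta>" using that \<open>0 < \<eta>\<close> unfolding d_def by auto
    have "hausdorff3_content d1 A + hausdorff3_content d2 B \<le> hausdorff3_content d A + hausdorff3_content d B"
      using d by (intro add_mono content_antimono)
    also have "\<dots> \<le> hausdorff3_content d (A \<union> B)" using content_sep[OF sep d(4)] .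
    also have "\<dots> \<le> vol3 (A \<union> B)" using content_le_vol3 d(1) .
    finally show ?thesis .
  qed
  have "vol3 A + vol3 B = (SUP d1\<in>{0<..}. SUP d2\<in>{0<..}. hausdorff3_content d1 A + hausdorff3_content d2 B)"
    unfolding vol3_def
    by (simp add: ennreal_SUP_add_left[symmetric] ennreal_SUP_add_right[symmetric])
  also have "\<dots> \<le> vol3 (A \<union> B)" using key by (intro SUP_least) auto
  finally show ?thesis .
qed



definition hu :: "real^3 \<Rightarrow> real^3 \<Rightarrow> real" where
  "hu x y = (norm (x - y))^2 / (2 * (x $ 3) * (y $ 3))"

lemma hdist_hu: "hdist x y = arcosh (1 + hu x y)"
  unfolding hdist_def hu_def by simp

lemma hu_nonneg: "x \<in> H3 \<Longrightarrow> y \<in> H3 \<Longrightarrow> hu x y \<ge> 0"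
  unfolding hu_def H3_def by auto

lemma hdist_sym: "hdist x y = hdist y x"
  unfolding hdist_def by (simp add: norm_minus_commute mult.commute mult.left_commute)

lemma hdist_self: "hdist x x = 0"
  unfolding hdist_def by simp

lemma hdist_nonneg: "x \<in> H3 \<Longrightarrow> y \<in> H3 \<Longrightarrow> hdist x y \<ge> 0"
  using hu_nonneg[of x y] by (simp add: hdist_hu)

lemma hdist_le_iff:
  assumes "x \<in> H3" "y \<in> H3" "r \<ge> 0"
  shows "hdist x y \<le> r \<longleftrightarrow> 1 + hu x y \<le> cosh r"
proof -
  have "hdist x y \<le> r \<longleftrightarrow> arcosh (1 + hu x y) \<le> arcosh (cosh r)"
    using assms by (simp add: hdist_hu arcosh_cosh_real)
  also have "\<dots> \<longleftrightarrow> 1 + hu x y \<le> cosh r"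
    using hu_nonneg[OF assms(1,2)] cosh_real_ge_1[of r]
  proof -
    have "\<not> arcosh (cosh r) < arcosh (1 + hu x y) \<longleftrightarrow> \<not> cosh r < 1 + hu x y"
      using hu_nonneg[OF assms(1,2)] cosh_real_ge_1[of r] by (subst arcosh_less_iff_real) auto
    then show ?thesis by (simp add: not_less)
  qed
  finally show ?thesis .
qed

lemma hdist_less_iff:
  assumes "x \<in> H3" "y \<in> H3" "r \<ge> 0"
  shows "hdist x y < r \<longleftrightarrow> 1 + hu x y < cosh r"
proof -
  have "hdist x y < r \<longleftrightarrow> arcosh (1 + hu x y) < arcosh (cosh r)"
    using assms by (simp add: hdist_hu arcosh_cosh_real)
  also have "\<dots> \<longleftrightarrow> 1 + hu x y < cosh r"
    using hu_nonneg[OF assms(1,2)] cosh_real_ge_1[of r]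
    by (subst arcosh_less_iff_real) auto
  finally show ?thesis .
qed

definition hT :: "real^3 \<Rightarrow> real^3 \<Rightarrow> real^3 \<Rightarrow> real^3" where
  "hT p q v = (\<chi> i. if i = 3 then (q$3/p$3) * v$i else (q$3/p$3) * (v$i - p$i) + q$i)"

lemma hT_diff: "hT p q v - hT p q w = (q$3/p$3) *\<^sub>R (v - w)"
  unfolding hT_def by (auto simp: vec_eq_iff right_diff_distrib)

lemma hT_3: "hT p q v $ 3 = (q$3/p$3) * v$3"
  unfolding hT_def by simp

lemma hT_center: "p \<in> H3 \<Longrightarrow> hT p q p = q"
  unfolding hT_def H3_def by (auto simp: vec_eq_iff)

lemma hT_H3: "p \<in> H3 \<Longrightarrow> q \<in> H3 \<Longrightarrow> v \<in> H3 \<Longrightarrow> hT p q v \<in> H3"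
  unfolding H3_def by (simp add: hT_3)

lemma hT_inv: "p \<in> H3 \<Longrightarrow> q \<in> H3 \<Longrightarrow> hT q p (hT p q v) = v"
  unfolding hT_def H3_def by (auto simp: vec_eq_iff)

lemma hT_hu: "p \<in> H3 \<Longrightarrow> q \<in> H3 \<Longrightarrow> hu (hT p q a) (hT p q b) = hu a b"
proof -
  assume "p \<in> H3" "q \<in> H3"
  then have l: "q$3/p$3 > 0" unfolding H3_def by auto
  define l where "l = q$3/p$3"
  have l0: "l > 0" using l unfolding l_def .
  have pq: "p$3 > 0" "q$3 > 0" using \<open>p \<in> H3\<close> \<open>q \<in> H3\<close> unfolding H3_def by auto
  have n: "norm (hT p q a - hT p q b) = l * norm (a - b)" unfolding hT_diff l_def using pq by simp
  have "hu (hT p q a) (hT p q b) = (l * norm (a - b))^2 / (2 * (l * a$3) * (l * b$3))"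
    unfolding hu_def n hT_3 l_def ..
  also have "\<dots> = (l^2 * (norm (a - b))^2) / (l^2 * (2 * a$3 * b$3))"
    by (simp add: power_mult_distrib power2_eq_square mult_ac)
  also have "\<dots> = hu a b" unfolding hu_def using l0 by simp
  finally show ?thesis .
qed

lemma hT_hdist: "p \<in> H3 \<Longrightarrow> q \<in> H3 \<Longrightarrow> hdist (hT p q a) (hT p q b) = hdist a b"
  by (simp add: hdist_hu hT_hu)

lemma hT_image:
  assumes "p \<in> H3" "q \<in> H3"
  shows "hT p q ` {w \<in> H3. P (hdist p w)} = {w \<in> H3. P (hdist q w)}"
proof
  show "hT p q ` {w \<in> H3. P (hdist p w)} \<subseteq> {w \<in> H3. P (hdist q w)}"
    using assms hT_H3 hT_hdist[OF assms, of p] hT_center[OF assms(1)]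
    by (auto simp: hT_hdist[OF assms])
  show "{w \<in> H3. P (hdist q w)} \<subseteq> hT p q ` {w \<in> H3. P (hdist p w)}"
  proof
    fix w assume w: "w \<in> {w \<in> H3. P (hdist q w)}"
    have "hT q p w \<in> H3" using w assms hT_H3 by auto
    moreover have "hdist p (hT q p w) = hdist q w"
      using hT_hdist[OF assms(2,1), of q w] hT_center[OF assms(2)] by simp
    moreover have "hT p q (hT q p w) = w" using hT_inv[OF assms(2,1)] .
    ultimately show "w \<in> hT p q ` {w \<in> H3. P (hdist p w)}" using w
      by (metis (mono_tags, lifting) image_eqI mem_Collect_eq)
  qed
qed

lemma arcosh_upper: assumes "u \<ge> 0" shows "arcosh (1 + u) \<le> 2 * u + sqrt (2 * u)"
proof -
  have "arcosh (1 + u) = ln (1 + (u + sqrt ((1 + u)^2 - 1)))"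
    using assms by (simp add: arcosh_real_def add.assoc)
  also have "\<dots> \<le> u + sqrt ((1 + u)^2 - 1)"
  proof (intro ln_add_one_self_le_self)
    have "(1 + u)^2 - 1 \<ge> 0" using assms by (simp add: power2_eq_square algebra_simps)
    then show "0 \<le> u + sqrt ((1 + u)^2 - 1)" using assms by simp
  qed
  also have "sqrt ((1 + u)^2 - 1) = sqrt (u^2 + 2 * u)" by (simp add: power2_eq_square algebra_simps)
  also have "\<dots> \<le> sqrt (u^2) + sqrt (2 * u)" using assms by (intro sqrt_add_le_add_sqrt) auto
  also have "sqrt (u^2) = u" using assms by simp
  finally show ?thesis by simp
qed

lemma arcosh_lower: assumes "u \<ge> 0" shows "sqrt (2 * u) / (1 + sqrt (2 * u)) \<le> arcosh (1 + u)"
proof -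
  define s where "s = sqrt (2 * u)"
  have s0: "s \<ge> 0" unfolding s_def using assms by simp
  have "ln (1 / (1 + s)) \<le> 1 / (1 + s) - 1" using s0 by (intro ln_le_minus_one) auto
  then have "s / (1 + s) \<le> ln (1 + s)" using s0 by (simp add: ln_div field_simps)
  also have "ln (1 + s) \<le> ln (1 + u + sqrt ((1 + u)^2 - 1))"
  proof -
    have "s \<le> sqrt ((1 + u)^2 - 1)" unfolding s_def using assms
      by (intro real_sqrt_le_mono) (simp add: power2_eq_square algebra_simps)
    then show ?thesis using s0 assms by (subst ln_le_cancel_iff) auto
  qed
  also have "\<dots> = arcosh (1 + u)" using assms by (simp add: arcosh_real_def)
  finally show ?thesis unfolding s_def .
qed

lemma cball_bounds:
  assumes p: "p \<in> H3" and q: "q \<in> H3" and r: "r \<ge> 0" and h: "hdist p q \<le> r"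
  defines "c \<equiv> cosh r - 1"
  shows "norm (p - q) \<le> (2*c+1) * p$3" "q$3 \<ge> p$3 / (2 + 8*c)" "q$3 \<le> (2*c+2) * p$3" "c \<ge> 0"
proof -
  have p3: "p$3 > 0" and q3: "q$3 > 0" using p q unfolding H3_def by auto
  have c0: "c \<ge> 0" unfolding c_def using cosh_real_ge_1[of r] by simp
  then show "c \<ge> 0" .
  have "hu p q \<le> c" using hdist_le_iff[OF p q r] h unfolding c_def by simp
  then have D: "(norm (p - q))^2 \<le> 2 * c * p$3 * q$3"
    unfolding hu_def using p3 q3 by (simp add: divide_le_eq mult_ac)
  have q3D: "q$3 \<le> p$3 + norm (p - q)"
    using component_le_norm_cart[of "p - q" 3] by simp
  have q3D': "p$3 - q$3 \<le> norm (p - q)"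
    using component_le_norm_cart[of "p - q" 3] by simp
  define D where "D = norm (p - q)"
  have D0: "D \<ge> 0" unfolding D_def by simp
  have D2: "D^2 \<le> 2 * c * p$3 * (p$3 + D)"
  proof -
    have "2 * c * p$3 * q$3 \<le> 2 * c * p$3 * (p$3 + D)"
      using q3D c0 p3 unfolding D_def by (intro mult_left_mono) auto
    then show ?thesis using D unfolding D_def by linarith
  qed
  show "norm (p - q) \<le> (2*c+1) * p$3"
  proof (rule ccontr)
    assume "\<not> ?thesis"
    then have gt: "D > (2*c+1) * p$3" unfolding D_def by simp
    have "(2*c+1) * p$3 > 0" using p3 c0 by simp
    then have "((2*c+1) * p$3) * D < D * D" using gt
      by (intro mult_strict_right_mono) auto
    moreover have "p$3 * ((2*c+1) * p$3) \<le> p$3 * D" using gt p3 by (intro mult_left_mono) auto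
    moreover have "2*c*p$3*p$3 \<le> p$3 * ((2*c+1) * p$3)" using p3 by (simp add: algebra_simps)
    moreover have "p$3 * p$3 > 0" using p3 by simp
    ultimately have "2 * c * p$3 * (p$3 + D) < D * D" by (simp add: algebra_simps)
    then show False using D2 by (simp add: power2_eq_square)
  qed
  then show "q$3 \<le> (2*c+2) * p$3" using q3D by (simp add: algebra_simps)
  show "q$3 \<ge> p$3 / (2 + 8*c)"
  proof (cases "q$3 \<ge> p$3 / 2")
    case True
    have "p$3/(2+8*c) \<le> p$3/2" using p3 c0 by (intro divide_left_mono) auto
    then show ?thesis using True by linarith
  next
    case False
    then have "p$3 - q$3 \<ge> p$3/2" by simp
    then have "(p$3/2)^2 \<le> (p$3 - q$3)^2" using p3 by (intro power_mono) auto
    also have "\<dots> \<le> D^2" using q3D' False p3 D0 unfolding D_def by (intro power_mono) auto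
    also have "\<dots> \<le> 2 * c * p$3 * q$3" using D unfolding D_def .
    finally have "p$3 * p$3 \<le> 8 * c * q$3 * p$3" by (simp add: power2_eq_square field_simps)
    then have "p$3 \<le> 8 * c * q$3" using p3 by simp
    then have "p$3 \<le> (2 + 8*c) * q$3" using q3 by (simp add: algebra_simps)
    then show ?thesis using c0 by (simp add: divide_le_eq mult_ac)
  qed
qed

lemma hdist_le_euclid:
  assumes a: "a$3 \<ge> m" and b: "b$3 \<ge> m" and m: "m > 0" and D: "norm (a - b) \<le> Dm"
  shows "hdist a b \<le> (Dm / m^2 + 1/m) * norm (a - b)"
proof -
  define D where "D = norm (a - b)"
  have D0: "D \<ge> 0" unfolding D_def by simp
  have a3: "a$3 > 0" and b3: "b$3 > 0" using a b m by auto
  have ab: "a$3 * b$3 \<ge> m^2" using a b m by (simp add: power2_eq_square mult_mono)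
  have u0: "hu a b \<ge> 0" unfolding hu_def using a3 b3 by simp
  have h1: "hdist a b \<le> 2 * hu a b + sqrt (2 * hu a b)" unfolding hdist_hu using arcosh_upper[OF u0] .
  have e: "2 * hu a b = D^2 / (a$3 * b$3)" unfolding hu_def D_def by simp
  have t0: "D^2 / (a$3 * b$3) \<le> D^2 / m^2" using ab m a3 b3 by (intro divide_left_mono) (auto intro: mult_pos_pos)
  have t1: "D^2 / m^2 \<le> (Dm / m^2) * D" using D0 D m unfolding D_def
    by (simp add: power2_eq_square divide_le_eq mult_right_mono)
  have t2: "sqrt (D^2 / (a$3 * b$3)) \<le> sqrt (D^2 / m^2)"
    using ab m a3 b3 by (intro real_sqrt_le_mono divide_left_mono) (auto intro: mult_pos_pos)
  have t3: "sqrt (D^2 / m^2) = D / m" using D0 m by (simp add: real_sqrt_divide)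
  have "hdist a b \<le> (Dm / m^2) * D + D / m" using h1 e t0 t1 t2 t3 arg_cong[OF e, of sqrt] by linarith
  then show ?thesis unfolding D_def by (simp add: algebra_simps)
qed

lemma euclid_le_hdist:
  assumes a: "a$3 \<ge> m" "a$3 \<le> M" and b: "b$3 \<ge> m" "b$3 \<le> M" and m: "m > 0" and D: "norm (a - b) \<le> Dm"
  shows "norm (a - b) \<le> M * (1 + Dm / m) * hdist a b"
proof -
  define D where "D = norm (a - b)"
  have D0: "D \<ge> 0" unfolding D_def by simp
  have a3: "a$3 > 0" and b3: "b$3 > 0" using a b m by auto
  have M0: "M > 0" using a m by simp
  have u0: "hu a b \<ge> 0" unfolding hu_def using a3 b3 by simp
  define s where "s = sqrt (2 * hu a b)"
  have s_eq: "s = D / sqrt (a$3 * b$3)"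
    unfolding s_def hu_def D_def using a3 b3 by (simp add: real_sqrt_divide)
  have abM: "a$3 * b$3 \<le> M^2" using a b a3 b3 by (simp add: power2_eq_square mult_mono)
  have abm: "a$3 * b$3 \<ge> m^2" using a b m by (simp add: power2_eq_square mult_mono)
  have sM: "s \<ge> D / M"
  proof -
    have "sqrt (a$3 * b$3) \<le> M" using abM M0 by (metis real_sqrt_le_iff real_sqrt_abs abs_of_pos)
    then show ?thesis unfolding s_eq using D0 a3 b3 M0 by (intro divide_left_mono) (auto intro: mult_pos_pos)
  qed
  have sm: "s \<le> Dm / m"
  proof -
    have "sqrt (a$3 * b$3) \<ge> m" using abm m by (metis real_sqrt_le_iff real_sqrt_abs abs_of_pos)
    then have "s \<le> D / m" unfolding s_eq using D0 m a3 b3 by (intro divide_left_mono) (auto intro: mult_pos_pos)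
    also have "\<dots> \<le> Dm / m" using D m unfolding D_def by (simp add: divide_right_mono)
    finally show ?thesis .
  qed
  have s0: "s \<ge> 0" unfolding s_def using u0 by simp
  have "s / (1 + s) \<le> hdist a b" unfolding hdist_hu s_def using arcosh_lower[OF u0] .
  moreover have "(D / M) / (1 + Dm / m) \<le> s / (1 + s)"
  proof -
    have "(D / M) / (1 + Dm / m) \<le> s / (1 + Dm/m)" using sM s0 sm
      by (intro divide_right_mono) auto
    also have "\<dots> \<le> s / (1 + s)" using s0 sm by (intro divide_left_mono) auto
    finally show ?thesis .
  qed
  ultimately have h: "D / (M * (1 + Dm / m)) \<le> hdist a b" by (simp add: divide_divide_eq_left)
  have "1 + Dm / m > 0" using sm s0 by (smt (verit))
  then have K: "M * (1 + Dm / m) > 0" using M0 by simp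
  have "D \<le> hdist a b * (M * (1 + Dm / m))" using h by (simp add: pos_divide_le_eq[OF K])
  then show ?thesis unfolding D_def by (simp add: mult_ac)
qed



definition chart :: "'a::metric_space \<Rightarrow> real \<Rightarrow> ('a \<Rightarrow> real^3) \<Rightarrow> bool" where
  "chart x R \<phi> \<longleftrightarrow> R > 0 \<and> \<phi> ` ball x R = {q \<in> H3. hdist (\<phi> x) q < R} \<and> \<phi> x \<in> H3 \<and>
     (\<forall>y\<in>ball x R. \<forall>z\<in>ball x R. hdist (\<phi> y) (\<phi> z) = dist y z)"

lemma hyp_chart:
  assumes "hyperbolic_3_manifold TYPE('a::metric_space)"
  shows "\<exists>R \<phi>. chart (x::'a) R \<phi>"
  using assms unfolding hyperbolic_3_manifold_def chart_def by blast

lemma chart_iso: "chart x R \<phi> \<Longrightarrow> y \<in> ball x R \<Longrightarrow> z \<in> ball x R \<Longrightarrow> hdist (\<phi> y) (\<phi> z) = dist y z"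
  unfolding chart_def by blast

lemma chart_H3: "chart x R \<phi> \<Longrightarrow> y \<in> ball x R \<Longrightarrow> \<phi> y \<in> H3"
  unfolding chart_def by blast

lemma chart_pos: "chart x R \<phi> \<Longrightarrow> R > 0"
  unfolding chart_def by blast

lemma chart_center: "chart x R \<phi> \<Longrightarrow> x \<in> ball x R"
  unfolding chart_def by auto

lemma chart_surj: "chart x R \<phi> \<Longrightarrow> q \<in> H3 \<Longrightarrow> hdist (\<phi> x) q < R \<Longrightarrow> \<exists>a\<in>ball x R. \<phi> a = q"
  unfolding chart_def by (metis (mono_tags, lifting) imageE mem_Collect_eq)

lemma chart_inj: "chart x R \<phi> \<Longrightarrow> inj_on \<phi> (ball x R)"
  unfolding inj_on_def using chart_iso by (metis dist_eq_0_iff hdist_self)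

lemma chart_tri:
  assumes ch: "chart x R \<phi>" and p: "p \<in> H3" and a: "a \<in> H3" and b: "b \<in> H3"
    and pa: "hdist p a < R" and pb: "hdist p b < R"
  shows "hdist a b \<le> hdist a p + hdist p b"
proof -
  have x3: "\<phi> x \<in> H3" using ch unfolding chart_def by blast
  let ?T = "hT p (\<phi> x)"
  have Tp: "?T p = \<phi> x" using hT_center[OF p] .
  have "hdist (\<phi> x) (?T a) < R" using pa hT_hdist[OF p x3, of p a] Tp by simp
  then obtain a' where a': "a' \<in> ball x R" "\<phi> a' = ?T a" using chart_surj[OF ch hT_H3[OF p x3 a]] by blast
  have "hdist (\<phi> x) (?T b) < R" using pb hT_hdist[OF p x3, of p b] Tp by simp
  then obtain b' where b': "b' \<in> ball x R" "\<phi> b' = ?T b" using chart_surj[OF ch hT_H3[OF p x3 b]] by blast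
  have xx: "x \<in> ball x R" using chart_center[OF ch] .
  have "hdist a b = hdist (?T a) (?T b)" using hT_hdist[OF p x3] by simp
  also have "\<dots> = dist a' b'" using chart_iso[OF ch a'(1) b'(1)] a' b' by simp
  also have "\<dots> \<le> dist a' x + dist x b'" by (rule dist_triangle)
  also have "dist a' x = hdist a p"
  proof -
    have "hdist a p = hdist (?T a) (?T p)" using hT_hdist[OF p x3] by simp
    also have "\<dots> = hdist (\<phi> a') (\<phi> x)" using a'(2) Tp by simp
    finally show ?thesis using chart_iso[OF ch a'(1) xx] by simp
  qed
  also have "dist x b' = hdist p b"
  proof -
    have "hdist p b = hdist (?T p) (?T b)" using hT_hdist[OF p x3] by simp
    also have "\<dots> = hdist (\<phi> x) (\<phi> b')" using b'(2) Tp by simp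
    finally show ?thesis using chart_iso[OF ch xx b'(1)] by simp
  qed
  finally show ?thesis .
qed

lemma chart_shrink:
  assumes ch: "chart x R \<phi>" and xy: "dist x y < R/2"
  shows "chart y (R/2) \<phi>"
proof -
  have R: "R > 0" using chart_pos[OF ch] .
  have yb: "y \<in> ball x R" using xy R by simp
  have sub: "ball y (R/2) \<subseteq> ball x R"
  proof
    fix a assume "a \<in> ball y (R/2)"
    then have "dist y a < R/2" by simp
    then show "a \<in> ball x R" using xy dist_triangle[of x a y] by simp
  qed
  have "\<phi> ` ball y (R/2) = {q \<in> H3. hdist (\<phi> y) q < R/2}"
  proof
    show "\<phi> ` ball y (R/2) \<subseteq> {q \<in> H3. hdist (\<phi> y) q < R/2}"
    proof
      fix q assume "q \<in> \<phi> ` ball y (R/2)"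
      then obtain a where a: "a \<in> ball y (R/2)" "q = \<phi> a" by blast
      have "a \<in> ball x R" using a sub by blast
      then show "q \<in> {q \<in> H3. hdist (\<phi> y) q < R/2}"
        using chart_H3[OF ch] chart_iso[OF ch yb] a by auto
    qed
    show "{q \<in> H3. hdist (\<phi> y) q < R/2} \<subseteq> \<phi> ` ball y (R/2)"
    proof
      fix q assume q: "q \<in> {q \<in> H3. hdist (\<phi> y) q < R/2}"
      have y3: "\<phi> y \<in> H3" using chart_H3[OF ch yb] .
      have x3: "\<phi> x \<in> H3" using chart_H3[OF ch chart_center[OF ch]] .
      have yx: "hdist (\<phi> y) (\<phi> x) = dist y x" using chart_iso[OF ch yb chart_center[OF ch]] .
      have "hdist (\<phi> x) q \<le> hdist (\<phi> x) (\<phi> y) + hdist (\<phi> y) q"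
        using chart_tri[OF ch y3 x3, of q] q yx xy R by (simp add: dist_commute)
      also have "\<dots> < R" using q yx xy hdist_sym[of "\<phi> x" "\<phi> y"] by (simp add: dist_commute)
      finally obtain a where a: "a \<in> ball x R" "\<phi> a = q" using chart_surj[OF ch] q by blast
      have "dist y a < R/2" using chart_iso[OF ch yb a(1)] a q by simp
      then show "q \<in> \<phi> ` ball y (R/2)" using a by auto
    qed
  qed
  then show ?thesis unfolding chart_def using R chart_H3[OF ch yb] chart_iso[OF ch] sub
    by (auto simp: subset_iff)
qed

lemma chart_cball_image:
  assumes ch: "chart x R \<phi>" and r: "0 \<le> r" "r < R"
  shows "\<phi> ` cball x r = {q \<in> H3. hdist (\<phi> x) q \<le> r}"
proof
  have cb: "cball x r \<subseteq> ball x R" using r by auto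
  show "\<phi> ` cball x r \<subseteq> {q \<in> H3. hdist (\<phi> x) q \<le> r}"
    using cb chart_H3[OF ch] chart_iso[OF ch chart_center[OF ch]] by (auto simp: subset_iff)
  show "{q \<in> H3. hdist (\<phi> x) q \<le> r} \<subseteq> \<phi> ` cball x r"
  proof
    fix q assume q: "q \<in> {q \<in> H3. hdist (\<phi> x) q \<le> r}"
    then obtain a where a: "a \<in> ball x R" "\<phi> a = q" using chart_surj[OF ch] r by force
    have "dist x a \<le> r" using chart_iso[OF ch chart_center[OF ch] a(1)] a q by simp
    then show "q \<in> \<phi> ` cball x r" using a by auto
  qed
qed

lemma vol_cball_eq:
  fixes y :: "'a::metric_space" and z :: "'b::metric_space"
  assumes ch1: "chart y R1 \<phi>" and ch2: "chart z R2 \<psi>" and r: "0 \<le> r" "r < R1" "r < R2"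
  shows "vol3 (cball z r) = vol3 (cball y r)"
proof -
  have y3: "\<phi> y \<in> H3" using chart_H3[OF ch1 chart_center[OF ch1]] .
  have z3: "\<psi> z \<in> H3" using chart_H3[OF ch2 chart_center[OF ch2]] .
  let ?T = "hT (\<phi> y) (\<psi> z)"
  let ?I = "inv_into (ball z R2) \<psi>"
  define G where "G a = ?I (?T (\<phi> a))" for a
  have inj: "inj_on \<psi> (ball z R2)" using chart_inj[OF ch2] .
  have img1: "\<phi> ` cball y r = {q \<in> H3. hdist (\<phi> y) q \<le> r}" using chart_cball_image[OF ch1 r(1,2)] .
  have img2: "\<psi> ` cball z r = {q \<in> H3. hdist (\<psi> z) q \<le> r}" using chart_cball_image[OF ch2 r(1,3)] .
  have imgT: "?T ` {q \<in> H3. hdist (\<phi> y) q \<le> r} = {q \<in> H3. hdist (\<psi> z) q \<le> r}"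
    using hT_image[OF y3 z3, of "\<lambda>t. t \<le> r"] .
  have cb2: "cball z r \<subseteq> ball z R2" using r by auto
  have Gprop: "G a \<in> cball z r \<and> \<psi> (G a) = ?T (\<phi> a)" if a: "a \<in> cball y r" for a
  proof -
    have "?T (\<phi> a) \<in> \<psi> ` cball z r" unfolding img2 imgT[symmetric] img1[symmetric]
      using a by (intro imageI)
    then obtain b where b: "b \<in> cball z r" "\<psi> b = ?T (\<phi> a)" by (metis imageE)
    have "G a = b" unfolding G_def using b cb2 inj by (metis inv_into_f_f subsetD)
    then show ?thesis using b by simp
  qed
  have "G ` cball y r = cball z r"
  proof
    show "G ` cball y r \<subseteq> cball z r" using Gprop by blast
    show "cball z r \<subseteq> G ` cball y r"
    proof
      fix b assume b: "b \<in> cball z r"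
      have pb: "\<psi> b \<in> {q \<in> H3. hdist (\<psi> z) q \<le> r}" unfolding img2[symmetric] using b by (rule imageI)
      define w where "w = hT (\<psi> z) (\<phi> y) (\<psi> b)"
      have w3: "w \<in> H3" unfolding w_def using pb hT_H3[OF z3 y3] by blast
      have "hdist (\<phi> y) w = hdist (\<psi> z) (\<psi> b)"
        unfolding w_def using hT_hdist[OF z3 y3, of "\<psi> z" "\<psi> b"] hT_center[OF z3] by simp
      then have "w \<in> \<phi> ` cball y r" unfolding img1 using w3 pb by simp
      then obtain a where a1: "a \<in> cball y r" and a2: "\<phi> a = w" by (auto simp: image_iff)
      have "?T w = \<psi> b" unfolding w_def using hT_inv[OF z3 y3] .
      then have a: "a \<in> cball y r" "\<psi> b = ?T (\<phi> a)" using a1 a2 by auto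
      have "G a = b" unfolding G_def using a b cb2 inj by (metis inv_into_f_f subsetD)
      then show "b \<in> G ` cball y r" using a by blast
    qed
  qed
  moreover have "dist (G a) (G a') = dist a a'" if "a \<in> cball y r" "a' \<in> cball y r" for a a'
  proof -
    have "dist (G a) (G a') = hdist (\<psi> (G a)) (\<psi> (G a'))"
      using chart_iso[OF ch2] Gprop that cb2 by (metis subsetD)
    also have "\<dots> = hdist (\<phi> a) (\<phi> a')" using Gprop that hT_hdist[OF y3 z3] by simp
    also have "\<dots> = dist a a'" using chart_iso[OF ch1] that r by auto
    finally show ?thesis .
  qed
  ultimately show ?thesis using vol3_iso_eq[of "cball y r" G] by simp
qed



lemma emeasure_cube:
  fixes c :: "real^3"
  assumes "t \<ge> 0"
  shows "emeasure lborel (cbox (\<chi> j. c$j - t) (\<chi> j. c$j + t)) = ennreal ((2*t)^3)"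
proof -
  let ?B = "cbox (\<chi> j. c$j - t) (\<chi> j. c$j + t)"
  have "c \<in> ?B" using assms by (auto simp: mem_box_cart)
  then have ne: "?B \<noteq> {}" by blast
  have "emeasure lborel ?B = ennreal (measure lborel ?B)"
    using emeasure_lborel_cbox_finite[of "\<chi> j. c$j - t" "\<chi> j. c$j + t"]
    by (intro emeasure_eq_ennreal_measure) auto
  also have "measure lborel ?B = (\<Prod>i\<in>UNIV. (\<chi> j. c$j + t) $ i - (\<chi> j. c$j - t) $ i)"
    using content_cbox_cart[OF ne] by simp
  also have "\<dots> = (2*t)^3" by (simp add: prod_constant)
  finally show ?thesis .
qed

lemma norm_le_3:
  fixes v :: "real^3"
  assumes "\<And>i. \<bar>v$i\<bar> \<le> e"
  shows "norm v \<le> 3 * e"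
proof -
  have "norm v \<le> (\<Sum>i\<in>UNIV. \<bar>v$i\<bar>)" by (rule norm_le_l1_cart)
  also have "\<dots> \<le> 3 * e" using assms[of 1] assms[of 2] assms[of 3] by (simp add: sum_3)
  finally show ?thesis .
qed

lemma chart_vol_pos:
  assumes ch: "chart x R \<phi>"
  shows "vol3 (ball x R) > 0"
proof -
  define S where "S = ball x R"
  define p where "p = \<phi> x"
  have R0: "R > 0" using chart_pos[OF ch] .
  have p3: "p \<in> H3" unfolding p_def using chart_H3[OF ch chart_center[OF ch]] .
  have p30: "p$3 > 0" using p3 unfolding H3_def by simp
  define c where "c = cosh R - 1"
  define L where "L = (2*c+1) * p$3"
  define m where "m = p$3 / (2 + 8*c)"
  define M where "M = (2*c+2) * p$3"
  define K where "K = M * (1 + 2*L / m)"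
  have c0: "c \<ge> 0" unfolding c_def using cosh_real_ge_1[of R] by simp
  have m0: "m > 0" unfolding m_def using p30 c0 by simp
  have L0: "L \<ge> 0" unfolding L_def using p30 c0 by simp
  have M0: "M > 0" unfolding M_def using p30 c0 by simp
  have K0: "K > 0" unfolding K_def using M0 L0 m0 by (simp add: add_pos_nonneg)
  have bnd: "norm (p - \<phi> a) \<le> L \<and> (\<phi> a)$3 \<ge> m \<and> (\<phi> a)$3 \<le> M \<and> \<phi> a \<in> H3" if "a \<in> S" for a
  proof -
    have a3: "\<phi> a \<in> H3" using chart_H3[OF ch] that unfolding S_def .
    have "hdist p (\<phi> a) \<le> R" using chart_iso[OF ch chart_center[OF ch], of a] that
      unfolding S_def p_def by simp
    from cball_bounds[OF p3 a3 _ this] R0 show ?thesis using a3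
      unfolding L_def m_def M_def c_def by simp
  qed
  have lip: "norm (\<phi> a - \<phi> b) \<le> K * dist a b" if "a \<in> S" "b \<in> S" for a b
  proof -
    have e: "\<phi> a - \<phi> b = (p - \<phi> b) - (p - \<phi> a)" by simp
    have "norm (\<phi> a - \<phi> b) \<le> norm (p - \<phi> b) + norm (p - \<phi> a)"
      unfolding e by (rule norm_triangle_ineq4)
    also have "\<dots> \<le> 2 * L" using bnd[OF that(1)] bnd[OF that(2)] by simp
    finally have D: "norm (\<phi> a - \<phi> b) \<le> 2 * L" .
    have "norm (\<phi> a - \<phi> b) \<le> M * (1 + 2 * L / m) * hdist (\<phi> a) (\<phi> b)"
      using bnd[OF that(1)] bnd[OF that(2)] m0 D by (intro euclid_le_hdist) auto
    also have "hdist (\<phi> a) (\<phi> b) = dist a b" using chart_iso[OF ch] that unfolding S_def by simp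
    finally show ?thesis unfolding K_def .
  qed
  define \<eta> where "\<eta> = min (p$3/2) (R * p$3 / 48)"
  have \<eta>0: "\<eta> > 0" unfolding \<eta>_def using p30 R0 by simp
  define Q0 where "Q0 = cbox (\<chi> j. p$j - \<eta>) (\<chi> j. p$j + \<eta>)"
  have Q0S: "Q0 \<subseteq> \<phi> ` S"
  proof
    fix q assume q: "q \<in> Q0"
    have qi: "\<bar>(p - q)$i\<bar> \<le> \<eta>" for i
    proof -
      have "p$i - \<eta> \<le> q$i \<and> q$i \<le> p$i + \<eta>" using q unfolding Q0_def mem_box_cart by simp
      then show ?thesis by (auto simp: abs_le_iff)
    qed
    have nq: "norm (p - q) \<le> 3 * \<eta>" using qi by (rule norm_le_3)
    have "\<eta> \<le> p$3/2" unfolding \<eta>_def by simp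
    then have q3: "q$3 \<ge> p$3/2" using qi[of 3] by (simp add: abs_le_iff)
    then have qH: "q \<in> H3" unfolding H3_def using p30 by simp
    have "hdist p q \<le> (3*\<eta> / (p$3/2)^2 + 1/(p$3/2)) * norm (p - q)"
      using q3 p30 nq by (intro hdist_le_euclid) auto
    also have "\<dots> \<le> (8 / p$3) * (3 * \<eta>)"
    proof (rule mult_mono)
      have "3*\<eta> / (p$3/2)^2 \<le> 3*(p$3/2) / (p$3/2)^2"
        using p30 \<eta>_def by (intro divide_right_mono) auto
      also have "\<dots> = 6 / p$3" using p30 by (simp add: power2_eq_square field_simps)
      finally show "3*\<eta> / (p$3/2)^2 + 1/(p$3/2) \<le> 8 / p$3" by simp
    qed (use nq p30 in auto)
    also have "\<dots> = 24 * \<eta> / p$3" by simp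
    also have "\<dots> \<le> 24 * (R * p$3 / 48) / p$3" using p30
      by (intro divide_right_mono) (auto simp: \<eta>_def)
    also have "\<dots> < R" using p30 R0 by simp
    finally obtain a where "a \<in> ball x R" "\<phi> a = q" using chart_surj[OF ch qH] unfolding p_def by auto
    then show "q \<in> \<phi> ` S" unfolding S_def by auto
  qed
  define k where "k = (2 * \<eta>)^3 / (2 * K)^3"
  have k0: "k > 0" unfolding k_def using \<eta>0 K0 by simp
  have "ennreal k \<le> hausdorff3_content 1 S"
  proof (rule content_ge)
    fix C :: "nat \<Rightarrow> 'a set" assume cov: "S \<subseteq> (\<Union>i. C i)" and C: "\<forall>i. bounded (C i) \<and> diameter (C i) \<le> 1"
    define d where "d i = diameter (C i)" for i
    have d0: "d i \<ge> 0" for i unfolding d_def using C diameter_ge_0 by blast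
    define s where "s i = (SOME s. s \<in> C i \<inter> S)" for i
    define Box where "Box i = (if C i \<inter> S = {} then {} else
        cbox (\<chi> j. \<phi> (s i) $j - K * d i) (\<chi> j. \<phi> (s i) $j + K * d i))" for i
    have s: "s i \<in> C i \<inter> S" if "C i \<inter> S \<noteq> {}" for i
      unfolding s_def using that by (rule some_in_eq[THEN iffD2])
    have Q0B: "Q0 \<subseteq> (\<Union>i. Box i)"
    proof
      fix q assume "q \<in> Q0"
      then obtain a where a: "a \<in> S" "q = \<phi> a" using Q0S by blast
      then obtain i where ai: "a \<in> C i" using cov by blast
      then have ne: "C i \<inter> S \<noteq> {}" using a by blast
      have "\<bar>(\<phi> a - \<phi> (s i))$j\<bar> \<le> K * d i" for j
      proof -
        have "\<bar>(\<phi> a - \<phi> (s i))$j\<bar> \<le> norm (\<phi> a - \<phi> (s i))" by (rule component_le_norm_cart)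
        also have "\<dots> \<le> K * dist a (s i)" using lip a(1) s[OF ne] by blast
        also have "\<dots> \<le> K * d i" unfolding d_def using K0 C ai s[OF ne]
          by (intro mult_left_mono diameter_bounded_bound) auto
        finally show ?thesis .
      qed
      then have "q \<in> Box i" unfolding Box_def using ne a
        by (auto simp: mem_box_cart abs_le_iff algebra_simps)
      then show "q \<in> (\<Union>i. Box i)" by blast
    qed
    have "ennreal ((2*\<eta>)^3) = emeasure lborel Q0" unfolding Q0_def using emeasure_cube \<eta>0 by simp
    also have "\<dots> \<le> emeasure lborel (\<Union>i. Box i)" using Q0B
      by (intro emeasure_mono) (auto simp: Box_def)
    also have "\<dots> \<le> (\<Sum>i. emeasure lborel (Box i))"
      by (intro emeasure_subadditive_countably) (auto simp: Box_def)
    also have "\<dots> \<le> (\<Sum>i. ennreal ((2*K)^3) * ennreal (d i ^ 3))"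
    proof (intro suminf_le summableI)
      fix i
      show "emeasure lborel (Box i) \<le> ennreal ((2*K)^3) * ennreal (d i ^ 3)"
      proof (cases "C i \<inter> S = {}")
        case True then show ?thesis unfolding Box_def by simp
      next
        case False
        have "emeasure lborel (Box i) = ennreal ((2 * (K * d i))^3)"
          unfolding Box_def using False emeasure_cube K0 d0 by simp
        also have "\<dots> = ennreal ((2*K)^3) * ennreal (d i ^ 3)"
          using K0 d0 by (simp add: ennreal_mult[symmetric] power_mult_distrib mult_ac)
        finally show ?thesis by simp
      qed
    qed
    also have "\<dots> = ennreal ((2*K)^3) * (\<Sum>i. ennreal (d i ^ 3))" by (rule ennreal_suminf_cmult)
    finally have main: "ennreal ((2*\<eta>)^3) \<le> ennreal ((2*K)^3) * (\<Sum>i. ennreal (d i ^ 3))" .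
    have "ennreal k = ennreal (1 / (2*K)^3) * ennreal ((2*\<eta>)^3)"
      unfolding k_def using K0 \<eta>0 by (simp add: ennreal_mult[symmetric])
    also have "\<dots> \<le> ennreal (1 / (2*K)^3) * (ennreal ((2*K)^3) * (\<Sum>i. ennreal (d i ^ 3)))"
      using main by (intro mult_left_mono) auto
    also have "\<dots> = (\<Sum>i. ennreal (d i ^ 3))"
      using K0 by (simp add: mult.assoc[symmetric] ennreal_mult[symmetric])
    finally show "ennreal k \<le> (\<Sum>i. ennreal ((diameter (C i)) ^ 3))" unfolding d_def .
  qed
  also have "\<dots> \<le> vol3 S" by (rule content_le_vol3) simp
  finally have kv: "ennreal k \<le> vol3 S" .
  have "0 < ennreal k" using k0 by simp
  then show ?thesis using kv unfolding S_def by (rule order_less_le_trans)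
qed



lemma floor_idx:
  fixes x :: real and n :: nat
  assumes "n \<ge> 1" "0 \<le> x" "x \<le> real n"
  defines "j \<equiv> min (n - 1) (nat \<lfloor>x\<rfloor>)"
  shows "real j \<le> x" "x \<le> real j + 1" "j < n"
proof -
  have f0: "\<lfloor>x\<rfloor> \<ge> 0" using assms by simp
  have f1: "real_of_int \<lfloor>x\<rfloor> \<le> x" "x < real_of_int \<lfloor>x\<rfloor> + 1" by linarith+
  have "real j \<le> x \<and> x \<le> real j + 1"
  proof (cases "nat \<lfloor>x\<rfloor> \<le> n - 1")
    case True
    then have "j = nat \<lfloor>x\<rfloor>" unfolding j_def by simp
    then have "real j = real_of_int \<lfloor>x\<rfloor>" using f0 by simp
    then show ?thesis using f1 by simp
  next
    case False
    then have j: "j = n - 1" unfolding j_def by simp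
    have rj: "real j = real n - 1" using assms(1) j by simp
    have "real_of_int \<lfloor>x\<rfloor> \<ge> real n" using False f0 by linarith
    then show ?thesis using rj f1 assms(3) by linarith
  qed
  then show "real j \<le> x" "x \<le> real j + 1" by auto
  show "j < n" unfolding j_def using assms(1) by simp
qed

lemma idx_lt:
  fixes a b n N :: nat
  assumes "a < n" "b < N"
  shows "a + n * b < n * N"
proof -
  have "a + n * b < n * (b + 1)" using assms(1) by simp
  also have "n * (b + 1) \<le> n * N" using assms(2) by (intro mult_le_mono2) simp
  finally show ?thesis .
qed

lemma idx_decode:
  fixes n :: nat
  assumes "a < n" "a' < n" "a + n * b = a' + n * b'"
  shows "a = a' \<and> b = b'"
proof -
  have "(a + n * b) mod n = a" using assms(1) by simp
  moreover have "(a' + n * b') mod n = a'" using assms(2) by simp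
  ultimately have aa: "a = a'" using assms(3) by simp
  have "n > 0" using assms(1) by simp
  then show ?thesis using assms(3) aa by simp
qed

lemma chart_vol_fin:
  assumes ch: "chart x R \<phi>" and r: "0 \<le> r" "r < R"
  shows "vol3 (cball x r) < \<infinity>"
proof -
  define S where "S = cball x r"
  define p where "p = \<phi> x"
  have p3: "p \<in> H3" unfolding p_def using chart_H3[OF ch chart_center[OF ch]] .
  have p30: "p$3 > 0" using p3 unfolding H3_def by simp
  define c where "c = cosh r - 1"
  define L where "L = (2*c+1) * p$3"
  define m where "m = p$3 / (2 + 8*c)"
  define Lh where "Lh = 2*L / m^2 + 1/m"
  have c0: "c \<ge> 0" unfolding c_def using cosh_real_ge_1[of r] by simp
  have m0: "m > 0" unfolding m_def using p30 c0 by simp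
  have L0: "L > 0" unfolding L_def using p30 c0 by (simp add: add_pos_nonneg)
  have Lh0: "Lh > 0" unfolding Lh_def using L0 m0 by (simp add: add_pos_pos)
  have SR: "S \<subseteq> ball x R" unfolding S_def using r by auto
  have bnd: "norm (p - \<phi> a) \<le> L \<and> (\<phi> a)$3 \<ge> m \<and> \<phi> a \<in> H3" if "a \<in> S" for a
  proof -
    have aR: "a \<in> ball x R" using that SR by blast
    have a3: "\<phi> a \<in> H3" using chart_H3[OF ch aR] .
    have "hdist p (\<phi> a) \<le> r" using chart_iso[OF ch chart_center[OF ch] aR] that
      unfolding S_def p_def by simp
    from cball_bounds[OF p3 a3 r(1) this] show ?thesis using a3
      unfolding L_def m_def c_def by simp
  qed
  have lip: "dist a b \<le> Lh * norm (\<phi> a - \<phi> b)" if "a \<in> S" "b \<in> S" for a b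
  proof -
    have e: "\<phi> a - \<phi> b = (p - \<phi> b) - (p - \<phi> a)" by simp
    have "norm (\<phi> a - \<phi> b) \<le> norm (p - \<phi> b) + norm (p - \<phi> a)"
      unfolding e by (rule norm_triangle_ineq4)
    also have "\<dots> \<le> 2 * L" using bnd[OF that(1)] bnd[OF that(2)] by simp
    finally have D: "norm (\<phi> a - \<phi> b) \<le> 2 * L" .
    have "hdist (\<phi> a) (\<phi> b) \<le> (2 * L / m^2 + 1/m) * norm (\<phi> a - \<phi> b)"
      using bnd[OF that(1)] bnd[OF that(2)] m0 D by (intro hdist_le_euclid) auto
    moreover have "hdist (\<phi> a) (\<phi> b) = dist a b" using chart_iso[OF ch] that SR by blast
    ultimately show ?thesis unfolding Lh_def by simp
  qed
  define B where "B = ennreal ((6 * Lh * L)^3)"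
  have "hausdorff3_content \<delta> S \<le> B" if \<delta>0: "\<delta> > 0" for \<delta>
  proof -
    define n where "n = nat \<lceil>6 * L * Lh / \<delta>\<rceil> + 1"
    have n1: "n \<ge> 1" unfolding n_def by simp
    have nge: "real n \<ge> 6 * L * Lh / \<delta>" unfolding n_def by linarith
    define h where "h = 2 * L / real n"
    have h0: "h > 0" unfolding h_def using L0 n1 by simp
    define e where "e = Lh * (3 * h)"
    have e0: "e \<ge> 0" unfolding e_def using Lh0 h0 by simp
    have e\<delta>: "e \<le> \<delta>"
    proof -
      have "e = 6 * L * Lh / real n" unfolding e_def h_def by simp
      also have "\<dots> \<le> 6 * L * Lh / (6 * L * Lh / \<delta>)"
        using nge L0 Lh0 \<delta>0 n1 by (intro divide_left_mono) (auto intro!: mult_pos_pos)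
      also have "\<dots> = \<delta>" using L0 Lh0 by simp
      finally show ?thesis .
    qed
    have ne: "real n * e = 6 * Lh * L" unfolding e_def h_def using n1 by simp
    define X where "X v k = ((v::real^3)$k - p$k + L) / h" for v k
    define J where "J v k = min (n - 1) (nat \<lfloor>X v k\<rfloor>)" for v k
    define idx where "idx v = J v 1 + n * (J v 2 + n * J v 3)" for v
    define C where "C i = {a \<in> S. idx (\<phi> a) = i}" for i
    have Xr: "0 \<le> X (\<phi> a) k \<and> X (\<phi> a) k \<le> real n" if "a \<in> S" for a k
    proof -
      have "\<bar>(p - \<phi> a)$k\<bar> \<le> L" using component_le_norm_cart[of "p - \<phi> a" k] bnd[OF that] by simp
      then have "0 \<le> \<phi> a $ k - p$k + L" "\<phi> a $ k - p$k + L \<le> 2 * L" by (auto simp: abs_le_iff)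
      moreover have "2 * L / h = real n" unfolding h_def using L0 n1 by simp
      moreover have "(\<phi> a $ k - p$k + L) / h \<le> (2 * L) / h"
        using calculation(2) h0 by (intro divide_right_mono) auto
      ultimately show ?thesis unfolding X_def using h0 by simp
    qed
    have Jp: "real (J (\<phi> a) k) \<le> X (\<phi> a) k \<and> X (\<phi> a) k \<le> real (J (\<phi> a) k) + 1 \<and> J (\<phi> a) k < n"
      if "a \<in> S" for a k
      using floor_idx[OF n1, of "X (\<phi> a) k"] Xr[OF that, of k] unfolding J_def by auto
    have diam: "dist a b \<le> e" if "a \<in> C i" "b \<in> C i" for a b i
    proof -
      have aS: "a \<in> S" and bS: "b \<in> S" and eq: "idx (\<phi> a) = idx (\<phi> b)" using that unfolding C_def by auto
      have Jeq: "J (\<phi> a) k = J (\<phi> b) k" for k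
      proof -
        have "J (\<phi> a) 1 = J (\<phi> b) 1 \<and> J (\<phi> a) 2 + n * J (\<phi> a) 3 = J (\<phi> b) 2 + n * J (\<phi> b) 3"
          using idx_decode[of "J (\<phi> a) 1" n "J (\<phi> b) 1"] Jp[OF aS] Jp[OF bS] eq unfolding idx_def by blast
        moreover then have "J (\<phi> a) 2 = J (\<phi> b) 2 \<and> J (\<phi> a) 3 = J (\<phi> b) 3"
          using idx_decode[of "J (\<phi> a) 2" n "J (\<phi> b) 2"] Jp[OF aS] Jp[OF bS] by blast
        ultimately show ?thesis by (metis exhaust_3)
      qed
      have "\<bar>(\<phi> a - \<phi> b)$k\<bar> \<le> h" for k
      proof -
        have "\<bar>X (\<phi> a) k - X (\<phi> b) k\<bar> \<le> 1" using Jp[OF aS, of k] Jp[OF bS, of k] Jeq[of k] by auto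
        moreover have "X (\<phi> a) k - X (\<phi> b) k = (\<phi> a - \<phi> b)$k / h" unfolding X_def
          by (simp add: diff_divide_distrib[symmetric])
        ultimately have "\<bar>(\<phi> a - \<phi> b)$k\<bar> / h \<le> 1" using h0 by simp
        then show ?thesis using h0 by simp
      qed
      then have "norm (\<phi> a - \<phi> b) \<le> 3 * h" by (rule norm_le_3)
      then have "Lh * norm (\<phi> a - \<phi> b) \<le> e" unfolding e_def using Lh0 by simp
      then show ?thesis using lip[OF aS bS] by simp
    qed
    have Cb: "bounded (C i)" for i using diam by (intro bounded_by_dist) blast
    have Cd: "diameter (C i) \<le> e" for i using diam e0 by (intro diameter_le_metric) auto
    have Cd0: "diameter (C i) \<ge> 0" for i using diameter_ge_0[OF Cb] .
    have Cempty: "C i = {}" if "i \<notin> {..<n^3}" for i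
    proof -
      have "idx (\<phi> a) < n^3" if "a \<in> S" for a
      proof -
        have "J (\<phi> a) 2 + n * J (\<phi> a) 3 < n * n"
          using Jp[OF that] by (intro idx_lt) auto
        then have "idx (\<phi> a) < n * (n * n)" unfolding idx_def
          using Jp[OF that] by (intro idx_lt) auto
        then show ?thesis by (simp add: power3_eq_cube)
      qed
      then show ?thesis using that unfolding C_def by auto
    qed
    have "hausdorff3_content \<delta> S \<le> (\<Sum>i. ennreal ((diameter (C i))^3))"
    proof (rule content_le_cover)
      show "S \<subseteq> (\<Union>i. C i)" unfolding C_def by blast
      show "bounded (C i)" for i by (rule Cb)
      show "diameter (C i) \<le> \<delta>" for i using Cd[of i] e\<delta> by simp
    qed
    also have "(\<Sum>i. ennreal ((diameter (C i))^3)) = (\<Sum>i\<in>{..<n^3}. ennreal ((diameter (C i))^3))"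
      using Cempty by (intro suminf_finite) auto
    also have "\<dots> \<le> of_nat (card {..<n^3}) * ennreal (e^3)"
      using Cd Cd0 by (intro sum_bounded_above ennreal_leI power_mono) auto
    also have "\<dots> = ennreal (real (n^3) * e^3)"
      using e0 by (simp add: ennreal_of_nat_eq_real_of_nat ennreal_mult[symmetric])
    also have "real (n^3) * e^3 = (6 * Lh * L)^3" using ne by (simp add: power_mult_distrib[symmetric])
    finally show ?thesis unfolding B_def .
  qed
  then have "vol3 S \<le> B" by (rule vol3_le)
  also have "B < \<infinity>" unfolding B_def by simp
  finally show ?thesis unfolding S_def .
qed



lemma chart_smaller:
  assumes ch: "chart x R \<phi>" and r: "0 < r" "r \<le> R"
  shows "chart x r \<phi>"
proof -
  have sub: "ball x r \<subseteq> ball x R" using r by auto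
  have "\<phi> ` ball x r = {q \<in> H3. hdist (\<phi> x) q < r}"
  proof
    show "\<phi> ` ball x r \<subseteq> {q \<in> H3. hdist (\<phi> x) q < r}"
      using sub chart_H3[OF ch] chart_iso[OF ch chart_center[OF ch]] by (auto simp: subset_iff)
    show "{q \<in> H3. hdist (\<phi> x) q < r} \<subseteq> \<phi> ` ball x r"
    proof
      fix q assume q: "q \<in> {q \<in> H3. hdist (\<phi> x) q < r}"
      then obtain a where a: "a \<in> ball x R" "\<phi> a = q" using chart_surj[OF ch] r by force
      have "dist x a < r" using chart_iso[OF ch chart_center[OF ch] a(1)] a q by simp
      then show "q \<in> \<phi> ` ball x r" using a by auto
    qed
  qed
  then show ?thesis unfolding chart_def using r chart_H3[OF ch chart_center[OF ch]] chart_iso[OF ch] sub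
    by (auto simp: subset_iff)
qed

lemma vol_cball_pos:
  assumes "hyperbolic_3_manifold TYPE('a::metric_space)" "\<epsilon> > 0"
  shows "vol3 (cball (z::'a) \<epsilon>) > 0"
proof -
  obtain R \<phi> where ch: "chart z R \<phi>" using hyp_chart[OF assms(1)] by blast
  have R0: "R > 0" using chart_pos[OF ch] .
  have ch': "chart z (min \<epsilon> R) \<phi>" using chart_smaller[OF ch] R0 assms(2) by simp
  have "0 < vol3 (ball z (min \<epsilon> R))" using chart_vol_pos[OF ch'] .
  also have "\<dots> \<le> vol3 (cball z \<epsilon>)" by (intro vol3_mono) auto
  finally show ?thesis .
qed

lemma ennreal_add_le_self:
  fixes a b :: ennreal
  assumes "a + b \<le> a" "a < \<infinity>"
  shows "b \<le> 0"
proof -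
  have "a + b \<le> a + 0" using assms(1) by simp
  then show ?thesis using assms(2) ennreal_add_left_cancel_le by auto
qed

lemma core:
  fixes F :: "'m::metric_space \<Rightarrow> 'n::metric_space"
  assumes vp: "volume_preserving_on U F" and lip: "one_lipschitz_on U F"
    and ch1: "chart y R1 \<phi>" and ch2: "chart (F y) R2 \<psi>" and r: "0 \<le> r" "r < R1" "r < R2"
    and AU: "cball y r \<union> B \<subseteq> U" and Bc: "closed B" and FB: "F ` B \<subseteq> cball (F y) r"
    and sep: "\<And>a b. a \<in> cball y r \<Longrightarrow> b \<in> B \<Longrightarrow> \<eta> \<le> dist a b" and \<eta>: "\<eta> > 0"
    and posB: "vol3 B > 0"
  shows False
proof -
  let ?A = "cball y r"
  have yU: "y \<in> U" using AU r by auto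
  have FA: "F ` ?A \<subseteq> cball (F y) r"
  proof
    fix w assume "w \<in> F ` ?A"
    then obtain a where a: "a \<in> ?A" "w = F a" by blast
    have "dist (F y) (F a) \<le> dist y a" using lip yU a AU unfolding one_lipschitz_on_def by blast
    then show "w \<in> cball (F y) r" using a by simp
  qed
  have borel: "?A \<union> B \<in> sets borel" using Bc by (intro borel_closed closed_Un) auto
  have "vol3 ?A + vol3 B \<le> vol3 (?A \<union> B)" using vol3_sep[OF sep \<eta>] by blast
  also have "\<dots> = vol3 (F ` (?A \<union> B))" using vp borel AU unfolding volume_preserving_on_def by metis
  also have "\<dots> \<le> vol3 (cball (F y) r)" using FA FB by (intro vol3_mono) auto
  also have "\<dots> = vol3 ?A" using vol_cball_eq[OF ch1 ch2 r] .
  finally have le: "vol3 ?A + vol3 B \<le> vol3 ?A" .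
  have "vol3 ?A < \<infinity>" using chart_vol_fin[OF ch1 r(1,2)] .
  then have "vol3 B \<le> 0" using ennreal_add_le_self le by blast
  then show False using posB by simp
qed



theorem propositionA1:
  fixes U :: "'m::metric_space set" and F :: "'m \<Rightarrow> 'n::metric_space"
  assumes "hyperbolic_3_manifold TYPE('m)"
    and "hyperbolic_3_manifold TYPE('n)"
    and "domain U"
    and "volume_preserving_on U F"
    and "one_lipschitz_on U F"
  shows "isometric_embedding_on U F"
proof -
  note hm = assms(1) and hn = assms(2) and vp = assms(4) and lip = assms(5)
  have oU: "open U" using assms(3) unfolding domain_def by blast
  have lipD: "dist (F a) (F b) \<le> dist a b" if "a \<in> U" "b \<in> U" for a b
    using lip that unfolding one_lipschitz_on_def by blast
  have inj: "inj_on F U"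
  proof (rule inj_onI, rule ccontr)
    fix x y assume xU: "x \<in> U" and yU: "y \<in> U" and Fxy: "F x = F y" and xy: "x \<noteq> y"
    define d where "d = dist x y"
    have d0: "d > 0" unfolding d_def using xy by simp
    obtain R \<phi> where ch1: "chart x R \<phi>" using hyp_chart[OF hm] by blast
    obtain R' \<psi> where ch2: "chart (F x) R' \<psi>" using hyp_chart[OF hn] by blast
    obtain ex where ex: "ex > 0" "ball x ex \<subseteq> U" using oU xU open_contains_ball by blast
    obtain ey where ey: "ey > 0" "ball y ey \<subseteq> U" using oU yU open_contains_ball by blast
    define r where "r = min (min R R') (min (min ex ey) d) / 4"
    have R0: "R > 0" "R' > 0" using chart_pos[OF ch1] chart_pos[OF ch2] by auto
    have r0: "r > 0" unfolding r_def using R0 ex ey d0 by simp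
    have rR: "r < R" "r < R'" "r < ex" "r < ey" "r \<le> d/4" unfolding r_def using R0 ex ey d0 by auto
    show False
    proof (rule core[OF vp lip ch1 ch2 _ rR(1,2)])
      show "0 \<le> r" using r0 by simp
      show "cball x r \<union> cball y r \<subseteq> U" using ex ey rR by auto
      show "closed (cball y r)" by simp
      show "F ` cball y r \<subseteq> cball (F x) r"
      proof
        fix w assume "w \<in> F ` cball y r"
        then obtain b where b: "b \<in> cball y r" "w = F b" by blast
        have "b \<in> U" using b ey rR by auto
        then have "dist (F y) (F b) \<le> dist y b" using lipD yU by blast
        then show "w \<in> cball (F x) r" using b Fxy by simp
      qed
      show "d/2 \<le> dist a b" if "a \<in> cball x r" "b \<in> cball y r" for a b
      proof -
        have t1: "dist x y \<le> dist x a + dist a y" by (rule dist_triangle)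
        have t2: "dist a y \<le> dist a b + dist b y" by (rule dist_triangle)
        have "d \<le> dist x a + dist a b + dist b y" unfolding d_def using t1 t2 by linarith
        then show ?thesis using that rR by (simp add: dist_commute)
      qed
      show "d/2 > 0" using d0 by simp
      show "vol3 (cball y r) > 0" using vol_cball_pos[OF hm r0] .
    qed
  qed
  have loc: "\<exists>\<rho>>0. ball x \<rho> \<subseteq> U \<and> (\<forall>y\<in>ball x \<rho>. \<forall>z\<in>ball x \<rho>. dist (F y) (F z) = dist y z)"
    if xU: "x \<in> U" for x
  proof -
    obtain R \<phi> where ch1: "chart x R \<phi>" using hyp_chart[OF hm] by blast
    obtain R' \<psi> where ch2: "chart (F x) R' \<psi>" using hyp_chart[OF hn] by blast
    obtain eU where eU: "eU > 0" "ball x eU \<subseteq> U" using oU xU open_contains_ball by blast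
    have R0: "R > 0" "R' > 0" using chart_pos[OF ch1] chart_pos[OF ch2] by auto
    define \<rho> where "\<rho> = min (min R R') eU / 8"
    have \<rho>0: "\<rho> > 0" unfolding \<rho>_def using R0 eU by simp
    have \<rho>R: "\<rho> \<le> R/8" "\<rho> \<le> R'/8" "\<rho> \<le> eU/8" unfolding \<rho>_def by auto
    have bU: "ball x \<rho> \<subseteq> U" using eU \<rho>R \<rho>0 by auto
    have iso: "dist (F y) (F z) = dist y z" if yb: "y \<in> ball x \<rho>" and zb: "z \<in> ball x \<rho>" for y z
    proof (rule ccontr)
      assume ne: "dist (F y) (F z) \<noteq> dist y z"
      have yU: "y \<in> U" and zU: "z \<in> U" using yb zb bU by auto
      define s where "s = dist y z"
      define t where "t = dist (F y) (F z)"
      have ts: "t < s" using lipD[OF yU zU] ne unfolding s_def t_def by simp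
      have t0: "t \<ge> 0" unfolding t_def by simp
      have s2: "s < 2 * \<rho>" unfolding s_def using yb zb dist_triangle[of y z x]
        by (simp add: dist_commute)
      have xy: "dist x y < \<rho>" using yb by simp
      have ch1': "chart y (R/2) \<phi>" using chart_shrink[OF ch1] xy \<rho>R R0 by simp
      have "dist (F x) (F y) \<le> dist x y" using lipD xU yU by blast
      then have ch2': "chart (F y) (R'/2) \<psi>" using chart_shrink[OF ch2] xy \<rho>R R0 by simp
      define r where "r = (s + t) / 2"
      define \<epsilon> where "\<epsilon> = (s - t) / 4"
      have \<epsilon>0: "\<epsilon> > 0" unfolding \<epsilon>_def using ts by simp
      show False
      proof (rule core[OF vp lip ch1' ch2'])
        show "0 \<le> r" unfolding r_def using t0 ts by simp
        show "r < R/2" "r < R'/2" unfolding r_def using ts s2 \<rho>R t0 R0 by auto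
        show "cball y r \<union> cball z \<epsilon> \<subseteq> U"
        proof
          fix a assume a: "a \<in> cball y r \<union> cball z \<epsilon>"
          have "dist x a < 4 * \<rho>"
          proof (cases "a \<in> cball y r")
            case True
            then have "dist y a \<le> r" by simp
            moreover have "r < 2 * \<rho>" unfolding r_def using ts s2 by simp
            ultimately show ?thesis using xy dist_triangle[of x a y] \<rho>0 by linarith
          next
            case False
            then have "dist z a \<le> \<epsilon>" using a by simp
            moreover have "\<epsilon> < 2 * \<rho>" unfolding \<epsilon>_def using ts s2 t0 by simp
            moreover have "dist x z < \<rho>" using zb by simp
            ultimately show ?thesis using dist_triangle[of x a z] \<rho>0 by linarith
          qed
          then show "a \<in> U" using eU \<rho>R by auto
        qed
        show "closed (cball z \<epsilon>)" by simp
        show "F ` cball z \<epsilon> \<subseteq> cball (F y) r"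
        proof
          fix w assume "w \<in> F ` cball z \<epsilon>"
          then obtain b where b: "b \<in> cball z \<epsilon>" "w = F b" by blast
          have "dist z b < 2 * \<rho>" using b \<epsilon>_def ts s2 t0 by simp
          then have "dist x b < 3 * \<rho>" using zb dist_triangle[of x b z] by simp
          then have bU': "b \<in> U" using eU \<rho>R by auto
          have "dist (F z) (F b) \<le> dist z b" using lipD zU bU' by blast
          then have "dist (F y) (F b) \<le> t + \<epsilon>"
            using b dist_triangle[of "F y" "F b" "F z"] unfolding t_def by simp
          also have "\<dots> \<le> r"
            unfolding r_def \<epsilon>_def using ts by (simp add: field_simps)
          finally show "w \<in> cball (F y) r" using b by simp
        qed
        show "(s - t) / 4 \<le> dist a b" if "a \<in> cball y r" "b \<in> cball z \<epsilon>" for a b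
        proof -
          have t1: "dist y z \<le> dist y a + dist a z" by (rule dist_triangle)
          have t2: "dist a z \<le> dist a b + dist b z" by (rule dist_triangle)
          have "s \<le> dist y a + dist a b + dist b z" unfolding s_def using t1 t2 by linarith
          then show ?thesis using that unfolding r_def \<epsilon>_def by (simp add: dist_commute)
        qed
        show "(s - t) / 4 > 0" using ts by simp
        show "vol3 (cball z \<epsilon>) > 0" using vol_cball_pos[OF hm \<epsilon>0] .
      qed
    qed
    show ?thesis using \<rho>0 bU iso by blast
  qed
  show ?thesis unfolding isometric_embedding_on_def using inj loc by blast
qed


end
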